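(* Let $K$ be a compact Hausdorff space and let $(f_n)_{n\in\omega}$ be a sequence of continuous functions $f_n\colon\operatorname{dom}(f_n)\to K$, where for each $n$ the set $\operatorname{dom}(f_n)$ is a closed subset of $K$, such that $K\times K=\bigcup_{n\in\omega}(f_n\cup f_n^{-1})$. Then $|K|\le\aleph_0$.
   Context: Functions are identified with their graphs: $f_n=\{(x,f_n(x)):x\in\operatorname{dom}(f_n)\}\subseteq K\times K$, and $f_n^{-1}=\{(f_n(x),x):x\in\operatorname{dom}(f_n)\}$. *)

theory Defs
  imports "HOL-Analysis.Analysis"
begin

definition graph_on :: "'a set \<Rightarrow> ('a \<Rightarrow> 'b) \<Rightarrow> ('a \<times> 'b) set" where
  "graph_on D f = {(x, f x) | x. x \<in> D}"

end

theory Submission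
  imports Defs
begin

lemma graph_closed:
  assumes H: "Hausdorff_space X" and D: "closedin X D"
    and f: "continuous_map (subtopology X D) X f"
  shows "closedin (prod_topology X X) (graph_on D f)"
proof -
  let ?Z = "prod_topology (subtopology X D) X"
  have c: "continuous_map ?Z (prod_topology X X) (\<lambda>z. (f (fst z), snd z))"
    using continuous_map_compose[OF continuous_map_fst f] continuous_map_snd
    by (auto intro!: continuous_map_pairedI simp: o_def)
  have cl: "closedin ?Z {z \<in> topspace ?Z. (f (fst z), snd z) \<in> (\<lambda>x. (x,x)) ` topspace X}"
    using closedin_continuous_map_preimage[OF c] H Hausdorff_space_closedin_diagonal by blast
  have DX: "closedin (prod_topology X X) (D \<times> topspace X)"
    using D by (simp add: closedin_prod_Times_iff)
  have eq: "?Z = subtopology (prod_topology X X) (D \<times> topspace X)"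
    by (simp add: subtopology_Times)
  have DS: "D \<subseteq> topspace X" using D closedin_subset by blast
  have fx: "\<And>x. x \<in> D \<Longrightarrow> f x \<in> topspace X"
    using continuous_map_image_subset_topspace[OF f] DS by auto
  have "graph_on D f = {z \<in> topspace ?Z. (f (fst z), snd z) \<in> (\<lambda>x. (x,x)) ` topspace X}"
    using DS fx by (auto simp: graph_on_def)
  moreover have "closedin (subtopology (prod_topology X X) (D \<times> topspace X))
     {z \<in> topspace ?Z. (f (fst z), snd z) \<in> (\<lambda>x. (x,x)) ` topspace X}"
    using cl eq by simp
  ultimately show ?thesis using DX closedin_trans_full by auto
qed

lemma graph_closed':
  assumes H: "Hausdorff_space X" and D: "closedin X D"
    and f: "continuous_map (subtopology X D) X f"
  shows "closedin (prod_topology X X) (converse (graph_on D f))"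
proof -
  have c: "continuous_map (prod_topology X X) (prod_topology X X) (\<lambda>z. (snd z, fst z))"
    by (auto intro!: continuous_map_pairedI continuous_map_fst continuous_map_snd)
  have DS: "D \<subseteq> topspace X" using D closedin_subset by blast
  have fx: "\<And>x. x \<in> D \<Longrightarrow> f x \<in> topspace X"
    using continuous_map_image_subset_topspace[OF f] DS by auto
  have "converse (graph_on D f) = {z \<in> topspace (prod_topology X X). (snd z, fst z) \<in> graph_on D f}"
    using DS fx by (auto simp: graph_on_def)
  then show ?thesis
    using closedin_continuous_map_preimage[OF c graph_closed[OF assms]] by simp
qed

lemma condensation:
  assumes "compact_space X" "S \<subseteq> topspace X" "uncountable S"
  shows "\<exists>p\<in>topspace X. \<forall>U. openin X U \<and> p \<in> U \<longrightarrow> uncountable (U \<inter> S)"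
proof (rule ccontr)
  assume "\<not> ?thesis"
  then have cov: "\<forall>p\<in>topspace X. \<exists>U. openin X U \<and> p \<in> U \<and> countable (U \<inter> S)" by blast
  let ?U = "{U. openin X U \<and> countable (U \<inter> S)}"
  have "topspace X \<subseteq> \<Union>?U" using cov by blast
  then obtain F where F: "finite F" "F \<subseteq> ?U" "topspace X \<subseteq> \<Union>F"
    using assms(1) unfolding compact_space_alt by (metis (no_types, lifting) mem_Collect_eq)
  have "S = \<Union>((\<lambda>U. U \<inter> S) ` F)" using F assms(2) by blast
  moreover have "countable (\<Union>((\<lambda>U. U \<inter> S) ` F))"
    using F by (intro countable_UN) (auto intro: countable_finite)
  ultimately show False using assms(3) by simp
qed

lemma isolated_pt:
  fixes G H :: "nat \<Rightarrow> ('a \<times> 'a) set"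
  assumes cX: "compact_space X" and hX: "Hausdorff_space X" and F: "closedin X F" "F \<noteq> {}"
    and G: "\<And>n. closedin (prod_topology X X) (G n)"
    and Hc: "\<And>n. closedin (prod_topology X X) (H n)"
    and cov: "F \<times> F \<subseteq> (\<Union>n. G n \<union> H n)"
    and Gf: "\<And>n x y y'. (x,y) \<in> G n \<Longrightarrow> (x,y') \<in> G n \<Longrightarrow> y = y'"
    and Hf: "\<And>n x x' y. (x,y) \<in> H n \<Longrightarrow> (x',y) \<in> H n \<Longrightarrow> x = x'"
  shows "\<exists>p W. openin X W \<and> W \<inter> F = {p}"
proof -
  define Y where "Y = prod_topology (subtopology X F) (subtopology X F)"
  have FS: "F \<subseteq> topspace X" using F closedin_subset by blast
  have topY: "topspace Y = F \<times> F" using FS by (auto simp: Y_def)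
  have cF: "compact_space (subtopology X F)"
    using closedin_compact_space[OF cX F(1)] compact_space_subtopology by blast
  have cY: "compact_space Y" unfolding Y_def using cF by (simp add: compact_space_prod_topology)
  have hY: "Hausdorff_space Y" unfolding Y_def using hX
    by (simp add: Hausdorff_space_prod_topology Hausdorff_space_subtopology)
  have Ysub: "Y = subtopology (prod_topology X X) (F \<times> F)"
    by (simp add: Y_def subtopology_Times)
  define \<G> where "\<G> = range (\<lambda>n. G n \<inter> (F \<times> F)) \<union> range (\<lambda>n. H n \<inter> (F \<times> F))"
  have cG: "countable \<G>" unfolding \<G>_def by (intro countable_Un countable_image countableI_type)
  have UG0: "\<Union>\<G> = F \<times> F"
  proof
    show "\<Union>\<G> \<subseteq> F \<times> F" unfolding \<G>_def by auto
    show "F \<times> F \<subseteq> \<Union>\<G>"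
    proof
      fix z assume zF: "z \<in> F \<times> F"
      then obtain n where "z \<in> G n \<union> H n" using cov by blast
      then show "z \<in> \<Union>\<G>" using zF unfolding \<G>_def by blast
    qed
  qed
  have UG: "\<Union>\<G> = topspace Y" using UG0 topY by simp
  have clG: "\<And>T. T \<in> \<G> \<Longrightarrow> closedin Y T"
  proof -
    fix T assume "T \<in> \<G>"
    then obtain n where "T = (F \<times> F) \<inter> G n \<or> T = (F \<times> F) \<inter> H n" unfolding \<G>_def by blast
    moreover have "closedin Y ((F \<times> F) \<inter> G n)"
      unfolding Ysub by (rule closedin_subtopology_Int_closed[OF G[of n]])
    moreover have "closedin Y ((F \<times> F) \<inter> H n)"
      unfolding Ysub by (rule closedin_subtopology_Int_closed[OF Hc[of n]])
    ultimately show "closedin Y T" by blast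
  qed
  have ne: "Y interior_of \<Union>\<G> \<noteq> {}"
  proof -
    have "Y interior_of \<Union>\<G> = topspace Y" by (simp only: UG interior_of_topspace)
    then show ?thesis using F(2) topY by simp
  qed
  have "\<exists>T\<in>\<G>. Y interior_of T \<noteq> {}"
  proof (rule ccontr)
    assume "\<not> ?thesis"
    have lc: "locally_compact_space Y" using cY compact_imp_locally_compact_space by blast
    have rg: "regular_space Y" using cY hY compact_Hausdorff_imp_regular_space by blast
    have "Y interior_of \<Union>\<G> = {}"
    proof (rule Baire_category_alt)
      show "completely_metrizable_space Y \<or> locally_compact_space Y \<and> regular_space Y"
        using lc rg by blast
      show "countable \<G>" by (rule cG)
      fix T assume "T \<in> \<G>"
      then show "closedin Y T \<and> Y interior_of T = {}" using clG \<open>\<not> (\<exists>T\<in>\<G>. Y interior_of T \<noteq> {})\<close> by blast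
    qed
    then show False using ne by simp
  qed
  then obtain T z where T: "T \<in> \<G>" and z: "z \<in> Y interior_of T" by blast
  have oY: "openin (prod_topology (subtopology X F) (subtopology X F)) (Y interior_of T)"
    unfolding Y_def by simp
  have zz: "(fst z, snd z) \<in> Y interior_of T" using z by simp
  obtain U V where UV: "openin (subtopology X F) U" "openin (subtopology X F) V"
    "fst z \<in> U" "snd z \<in> V" "U \<times> V \<subseteq> Y interior_of T"
    using openin_prod_topology_alt[THEN iffD1, OF oY, rule_format, OF zz] by blast
  have UVT: "U \<times> V \<subseteq> T" using order_trans[OF UV(5) interior_of_subset] .
  show ?thesis
  proof (cases "\<exists>n. T = G n \<inter> (F \<times> F)")
    case True
    then obtain n where n: "T = G n \<inter> (F \<times> F)" by blast
    have "V = {snd z}"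
    proof
      show "V \<subseteq> {snd z}"
      proof
        fix v assume "v \<in> V"
        then have "(fst z, v) \<in> U \<times> V" "(fst z, snd z) \<in> U \<times> V" using UV(3,4) by blast+
        then have "(fst z, v) \<in> G n" "(fst z, snd z) \<in> G n" using UVT unfolding n by blast+
        then show "v \<in> {snd z}" using Gf by blast
      qed
    qed (use UV(3,4) in blast)
    moreover obtain W where "openin X W" "V = W \<inter> F" using UV(2) unfolding openin_subtopology by blast
    ultimately show ?thesis by auto
  next
    case False
    then obtain n where n: "T = H n \<inter> (F \<times> F)" using T unfolding \<G>_def by blast
    have "U = {fst z}"
    proof
      show "U \<subseteq> {fst z}"
      proof
        fix u assume "u \<in> U"
        then have "(u, snd z) \<in> U \<times> V" "(fst z, snd z) \<in> U \<times> V" using UV(3,4) by blast+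
        then have "(u, snd z) \<in> H n" "(fst z, snd z) \<in> H n" using UVT unfolding n by blast+
        then show "u \<in> {fst z}" using Hf by blast
      qed
    qed (use UV(3,4) in blast)
    moreover obtain W where "openin X W" "U = W \<inter> F" using UV(1) unfolding openin_subtopology by blast
    ultimately show ?thesis by auto
  qed
qed

theorem theorem4p1:
  fixes X :: "'a topology"
    and D :: "nat \<Rightarrow> 'a set"
    and f :: "nat \<Rightarrow> 'a \<Rightarrow> 'a"
  assumes "compact_space X"
    and "Hausdorff_space X"
    and "\<And>n. closedin X (D n)"
    and "\<And>n. continuous_map (subtopology X (D n)) X (f n)"
    and "topspace X \<times> topspace X = (\<Union>n. graph_on (D n) (f n) \<union> converse (graph_on (D n) (f n)))"
  shows "countable (topspace X)"
proof (rule ccontr)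
  assume unc: "\<not> countable (topspace X)"
  let ?K = "topspace X"
  have DS: "\<And>n. D n \<subseteq> ?K" using assms(3) closedin_subset by blast
  have fx: "\<And>n x. x \<in> D n \<Longrightarrow> f n x \<in> ?K"
    using continuous_map_image_subset_topspace[OF assms(4)] DS by fastforce
  define L where "L = {p \<in> ?K. \<forall>U. openin X U \<and> p \<in> U \<longrightarrow> uncountable U}"
  have condL: "q \<in> L" if "S \<subseteq> ?K" "q \<in> ?K" "\<forall>U. openin X U \<and> q \<in> U \<longrightarrow> uncountable (U \<inter> S)" for S q
  proof -
    have "\<forall>U. openin X U \<and> q \<in> U \<longrightarrow> uncountable U"
    proof (intro allI impI)
      fix U assume "openin X U \<and> q \<in> U"
      then have "uncountable (U \<inter> S)" using that(3) by blast
      then show "uncountable U" using countable_subset[OF Int_lower1] by blast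
    qed
    then show ?thesis using that(2) unfolding L_def by blast
  qed
  obtain p0 where "p0 \<in> ?K" "\<forall>U. openin X U \<and> p0 \<in> U \<longrightarrow> uncountable (U \<inter> ?K)"
    using condensation[OF assms(1) order_refl unc] by blast
  then have "p0 \<in> L" using condL[of ?K p0] by blast
  then have Lne: "L \<noteq> {}" by blast
  have Lcl: "closedin X L"
  proof -
    have "openin X (?K - L)"
    proof (subst openin_subopen, intro ballI)
      fix x assume "x \<in> ?K - L"
      then obtain U where U: "openin X U" "x \<in> U" "countable U" unfolding L_def by blast
      then have "U \<subseteq> ?K - L" using openin_subset[OF U(1)] unfolding L_def by blast
      then show "\<exists>T. openin X T \<and> x \<in> T \<and> T \<subseteq> ?K - L" using U by blast
    qed
    moreover have "L \<subseteq> ?K" unfolding L_def by blast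
    ultimately show ?thesis by (simp add: closedin_def)
  qed
  have "L \<times> L \<subseteq> ?K \<times> ?K" using closedin_subset[OF Lcl] by blast
  then have cov2: "L \<times> L \<subseteq> (\<Union>n. graph_on (D n) (f n) \<union> converse (graph_on (D n) (f n)))"
    unfolding assms(5)[symmetric] .
  have Gf: "\<And>n x y y'. (x,y) \<in> graph_on (D n) (f n) \<Longrightarrow> (x,y') \<in> graph_on (D n) (f n) \<Longrightarrow> y = y'"
    by (auto simp: graph_on_def)
  have Hf: "\<And>n x x' y. (x,y) \<in> converse (graph_on (D n) (f n)) \<Longrightarrow> (x',y) \<in> converse (graph_on (D n) (f n)) \<Longrightarrow> x = x'"
    by (auto simp: graph_on_def)
  have gc: "\<And>n. closedin (prod_topology X X) (graph_on (D n) (f n))"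
    by (rule graph_closed[OF assms(2) assms(3) assms(4)])
  have gc': "\<And>n. closedin (prod_topology X X) (converse (graph_on (D n) (f n)))"
    by (rule graph_closed'[OF assms(2) assms(3) assms(4)])
  have "\<exists>p W. openin X W \<and> W \<inter> L = {p}"
    apply (rule isolated_pt[where G="\<lambda>n. graph_on (D n) (f n)" and H="\<lambda>n. converse (graph_on (D n) (f n))"])
            apply (rule assms(1))
           apply (rule assms(2))
          apply (rule Lcl)
         apply (rule Lne)
        apply (rule gc)
       apply (rule gc')
      apply (rule cov2)
     apply (erule (1) Gf)
    apply (erule (1) Hf)
    done
  then obtain p W where W: "openin X W" "W \<inter> L = {p}" by blast
  have pL: "p \<in> L" and pW: "p \<in> W" using W by auto
  have "regular_space X" using assms(1,2) compact_Hausdorff_imp_regular_space by blast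
  then have "neighbourhood_base_of (closedin X) X" by (simp add: neighbourhood_base_of_closedin)
  then obtain N C where NC: "openin X N" "closedin X C" "p \<in> N" "N \<subseteq> C" "C \<subseteq> W"
    using neighbourhood_base_of[THEN iffD1, rule_format, OF _ conjI[OF W(1) pW]] by blast
  have CK: "C \<subseteq> ?K" using NC(2) closedin_subset by blast
  have "uncountable N" using pL NC(1,3) unfolding L_def by blast
  then have uC: "uncountable C" using countable_subset[OF NC(4)] by blast
  have key: "\<exists>n. p \<in> D n \<and> f n p = x" if x: "x \<in> ?K" for x
  proof -
    define A where "A n = {y \<in> D n. f n y = x}" for n
    have Acl: "closedin X (A n)" for n
    proof -
      have "closedin (subtopology X (D n)) {y \<in> topspace (subtopology X (D n)). f n y \<in> {x}}"
        using closedin_continuous_map_preimage[OF assms(4) closedin_Hausdorff_singleton[OF assms(2) x]] .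
      moreover have "{y \<in> topspace (subtopology X (D n)). f n y \<in> {x}} = A n"
        using DS unfolding A_def by auto
      ultimately have "closedin (subtopology X (D n)) (A n)" by simp
      then show ?thesis using closedin_trans_full assms(3) by blast
    qed
    have Csub: "C \<subseteq> ((\<lambda>n. f n x) ` {n. x \<in> D n}) \<union> (\<Union>n. A n \<inter> C)"
    proof
      fix y assume y: "y \<in> C"
      then have "(x, y) \<in> ?K \<times> ?K" using x CK by auto
      then obtain n where "(x,y) \<in> graph_on (D n) (f n) \<or> (x,y) \<in> converse (graph_on (D n) (f n))"
        using assms(5) by blast
      then show "y \<in> ((\<lambda>n. f n x) ` {n. x \<in> D n}) \<union> (\<Union>n. A n \<inter> C)"
      proof (elim disjE)
        assume "(x,y) \<in> graph_on (D n) (f n)"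
        then have "x \<in> D n" "y = f n x" by (auto simp: graph_on_def)
        then show ?thesis by blast
      next
        assume "(x,y) \<in> converse (graph_on (D n) (f n))"
        then have "y \<in> D n" "f n y = x" by (auto simp: graph_on_def)
        then have "y \<in> A n \<inter> C" using y unfolding A_def by blast
        then show ?thesis by blast
      qed
    qed
    have cim: "countable ((\<lambda>n. f n x) ` {n. x \<in> D n})"
      by (rule countable_image) simp
    have "\<exists>n. uncountable (A n \<inter> C)"
    proof (rule ccontr)
      assume "\<not> (\<exists>n. uncountable (A n \<inter> C))"
      then have "countable (\<Union>n. A n \<inter> C)" by (intro countable_UN) auto
      then have "countable (((\<lambda>n. f n x) ` {n. x \<in> D n}) \<union> (\<Union>n. A n \<inter> C))"
        using cim by (rule countable_Un[rotated])
      then have "countable C" using countable_subset[OF Csub] by blast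
      then show False using uC by blast
    qed
    then obtain n where un: "uncountable (A n \<inter> C)" by blast
    have clAC: "closedin X (A n \<inter> C)" using Acl NC(2) by blast
    obtain q where q: "q \<in> ?K" "\<forall>U. openin X U \<and> q \<in> U \<longrightarrow> uncountable (U \<inter> (A n \<inter> C))"
      using condensation[OF assms(1) closedin_subset[OF clAC] un] by blast
    have qAC: "q \<in> A n \<inter> C"
    proof (rule ccontr)
      assume "q \<notin> A n \<inter> C"
      moreover have "openin X (?K - (A n \<inter> C))" using clAC by (simp add: closedin_def)
      ultimately have "uncountable ((?K - (A n \<inter> C)) \<inter> (A n \<inter> C))" using q by blast
      moreover have "(?K - (A n \<inter> C)) \<inter> (A n \<inter> C) = {}" by blast
      ultimately show False by simp
    qed
    have "q \<in> L" using condL[OF closedin_subset[OF clAC] q(1)] q(2) by blast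
    moreover have "q \<in> W" using qAC NC(5) by blast
    ultimately have "q = p" using W(2) by blast
    then show ?thesis using qAC unfolding A_def by blast
  qed
  have "?K \<subseteq> (\<lambda>n. f n p) ` UNIV" using key by blast
  moreover have "countable ((\<lambda>n. f n p) ` UNIV)" by simp
  ultimately show False using unc countable_subset by blast
qed

end
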